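(* Let $\mathcal{H}\subseteq\{0,1\}^{\mathcal{X}}$, $m\in\mathbb{N}$, and let $C\subseteq V_m(\mathcal{H})$ be a finite clique in $G_m(\mathcal{H})$. Then there exists $x\in\mathcal{X}$ such that at least $\frac{|C|-1}{2m}$ datasets in $C$ contain the labeled example $(x,1)$ and at least $\frac{|C|-1}{2m}$ datasets in $C$ contain the labeled example $(x,0)$.
   Context: A dataset of size $m$ is $S=((x_1,y_1),\dots,(x_m,y_m))\in(\mathcal{X}\times\{0,1\})^m$, and $S$ contains $(x,y)$ if $(x,y)=(x_i,y_i)$ for some $i$; $S$ is $\mathcal{H}$-realizable if some $h\in\mathcal{H}$ satisfies $h(x_i)=y_i$ for all $i$; $V_m(\mathcal{H})$ is the set of realizable datasets of size $m$; $G_m(\mathcal{H})$ is the graph on $V_m(\mathcal{H})$ with $S,S'$ adjacent iff there is $x$ with $(x,0)$ contained in $S$ and $(x,1)$ contained in $S'$. *)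

theory Defs
  imports Main Complex_Main
begin

text \<open>Labels {0,1} are encoded as bool: False = 0, True = 1.
  A dataset of size m is a list of length m of labelled examples;
  "S contains (x,y)" means (x,y) occurs in S.\<close>

definition contains :: "('x \<times> bool) list \<Rightarrow> 'x \<Rightarrow> bool \<Rightarrow> bool" where
  "contains S x y \<longleftrightarrow> (x, y) \<in> set S"

definition realizable :: "('x \<Rightarrow> bool) set \<Rightarrow> ('x \<times> bool) list \<Rightarrow> bool" where
  "realizable H S \<longleftrightarrow> (\<exists>h\<in>H. \<forall>i<length S. h (fst (S ! i)) = snd (S ! i))"

definition V :: "('x \<Rightarrow> bool) set \<Rightarrow> nat \<Rightarrow> ('x \<times> bool) list set" where
  "V H m = {S. length S = m \<and> realizable H S}"

text \<open>Adjacency in G_m(H) (undirected graph: symmetric closure of the defining relation).\<close>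
definition adjG :: "('x \<Rightarrow> bool) set \<Rightarrow> nat \<Rightarrow> ('x \<times> bool) list \<Rightarrow> ('x \<times> bool) list \<Rightarrow> bool" where
  "adjG H m S S' \<longleftrightarrow> S \<in> V H m \<and> S' \<in> V H m \<and>
     ((\<exists>x. contains S x False \<and> contains S' x True) \<or> (\<exists>x. contains S' x False \<and> contains S x True))"

definition is_clique :: "('x \<Rightarrow> bool) set \<Rightarrow> nat \<Rightarrow> ('x \<times> bool) list set \<Rightarrow> bool" where
  "is_clique H m C \<longleftrightarrow> C \<subseteq> V H m \<and> (\<forall>S\<in>C. \<forall>S'\<in>C. S \<noteq> S' \<longrightarrow> adjG H m S S')"

end

theory Submission
  imports Defs
begin

lemma count_S:
  fixes S :: "('x \<times> bool) list"
  assumes "finite X"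
  shows "card {x\<in>X. (x,True)\<in>set S} + card {x\<in>X. (x,False)\<in>set S} \<le> length S"
proof -
  let ?U = "(\<lambda>x. (x,True)) ` {x\<in>X. (x,True)\<in>set S}"
  let ?W = "(\<lambda>x. (x,False)) ` {x\<in>X. (x,False)\<in>set S}"
  have cU: "card ?U = card {x\<in>X. (x,True)\<in>set S}" by (rule card_image) (auto simp: inj_on_def)
  have cW: "card ?W = card {x\<in>X. (x,False)\<in>set S}" by (rule card_image) (auto simp: inj_on_def)
  have "card (?U \<union> ?W) = card ?U + card ?W"
    by (rule card_Un_disjoint) (use assms in auto)
  moreover have "card (?U \<union> ?W) \<le> card (set S)" by (rule card_mono) auto
  moreover have "card (set S) \<le> length S" by (rule card_length)
  ultimately show ?thesis using cU cW by linarith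
qed

lemma card_filter_sum:
  assumes "finite C"
  shows "card {S\<in>C. P S} = (\<Sum>S\<in>C. if P S then 1 else (0::nat))"
  using assms by (simp add: sum.If_cases Int_def conj_commute)

lemma swap_count:
  assumes "finite X" "finite C"
  shows "(\<Sum>x\<in>X. card {S\<in>C. P x S}) = (\<Sum>S\<in>C. card {x\<in>X. P x S})"
proof -
  have "(\<Sum>x\<in>X. card {S\<in>C. P x S}) = (\<Sum>x\<in>X. \<Sum>S\<in>C. if P x S then 1 else (0::nat))"
    using assms by (simp add: card_filter_sum)
  also have "\<dots> = (\<Sum>S\<in>C. \<Sum>x\<in>X. if P x S then 1 else (0::nat))" by (rule sum.swap)
  also have "\<dots> = (\<Sum>S\<in>C. card {x\<in>X. P x S})"
    using assms by (simp add: card_filter_sum)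
  finally show ?thesis .
qed

lemma prod_bound:
  fixes a b t :: real
  assumes "a \<ge> 0" "b \<ge> 0" "t > 0" "a < t \<or> b < t"
  shows "a*b \<le> t*(a+b) \<and> (a*b > 0 \<longrightarrow> a*b < t*(a+b))"
proof -
  have e: "t*(a+b) = t*a + t*b" by (simp add: distrib_left)
  have ta: "t*a \<ge> 0" "t*b \<ge> 0" using assms by simp_all
  obtain c where c: "a*b \<le> c" "0 < a*b \<Longrightarrow> a*b < c" "c \<le> t*(a+b)"
  proof (cases "a < t")
    case True
    have h1: "a*b \<le> t*b" using True assms by (simp add: mult_right_mono)
    have h2: "a*b < t*b" if "a*b > 0"
    proof -
      have "b > 0" using assms that by (cases "b = 0") auto
      then show "a*b < t*b" using True by (rule mult_strict_right_mono[rotated])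
    qed
    have h3: "t*b \<le> t*(a+b)" using e ta by linarith
    show ?thesis by (rule that[OF h1 h2 h3])
  next
    case False
    then have bt: "b < t" using assms by auto
    have h1: "a*b \<le> t*a" using bt assms by (simp add: mult_left_mono mult.commute)
    have h2: "a*b < t*a" if "a*b > 0"
    proof -
      have "a > 0" using assms that by (cases "a = 0") auto
      then have "a*b < a*t" using bt by (rule mult_strict_left_mono[rotated])
      then show ?thesis by (simp add: mult.commute)
    qed
    have h3: "t*a \<le> t*(a+b)" using e ta by linarith
    show ?thesis by (rule that[OF h1 h2 h3])
  qed
  show ?thesis
  proof (intro conjI impI)
    show "a*b \<le> t*(a+b)" using c(1,3) by (rule order_trans)
  next
    assume "0 < a*b"
    then have "a*b < c" by (rule c(2))
    then show "a*b < t*(a+b)" using c(3) by (rule less_le_trans)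
  qed
qed

theorem mainTheorem10:
  fixes H :: "('x \<Rightarrow> bool) set" and m :: nat and C :: "('x \<times> bool) list set"
  assumes "finite C" and "is_clique H m C"
  shows "\<exists>x. real (card {S\<in>C. contains S x True}) \<ge> (real (card C) - 1) / (2 * real m)
            \<and> real (card {S\<in>C. contains S x False}) \<ge> (real (card C) - 1) / (2 * real m)"
proof (cases "m = 0 \<or> card C \<le> 1")
  case True
  then have "(real (card C) - 1) / (2 * real m) \<le> 0"
  proof (elim disjE)
    assume "m = 0" then show ?thesis by simp
  next
    assume "card C \<le> 1" then show ?thesis by (simp add: divide_nonpos_nonneg)
  qed
  then show ?thesis by (meson of_nat_0_le_iff order_trans)
next
  case False
  define n where "n = card C"
  define t where "t = (real n - 1) / (2 * real m)"
  define A where "A x = {S\<in>C. contains S x True}" for x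
  define B where "B x = {S\<in>C. contains S x False}" for x
  define X where "X = (\<Union>S\<in>C. fst ` set S)"
  define P where "P = {(S,S'). S\<in>C \<and> S'\<in>C \<and> (\<exists>x. contains S x False \<and> contains S' x True)}"
  have m1: "m \<ge> 1" and n2: "n \<ge> 2" using False n_def by auto
  have tpos: "t > 0" using m1 n2 unfolding t_def by auto
  have finX: "finite X" unfolding X_def using assms(1) by auto
  show ?thesis
  proof (rule ccontr)
    assume neg: "\<not> ?thesis"
    have neg': "real (card (A x)) < t \<or> real (card (B x)) < t" for x
      using neg unfolding A_def B_def t_def n_def by (meson not_le)
    have CC: "finite (C \<times> C)" using assms(1) by auto
    have finP: "finite P" by (rule finite_subset[OF _ CC]) (auto simp: P_def)
    have PU: "P \<subseteq> (\<Union>x\<in>X. B x \<times> A x)"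
    proof
      fix p assume "p \<in> P"
      then obtain S S' x where p: "p = (S,S')" "S\<in>C" "S'\<in>C" "contains S x False" "contains S' x True"
        unfolding P_def by auto
      have "x \<in> X" using p unfolding X_def contains_def by force
      then show "p \<in> (\<Union>x\<in>X. B x \<times> A x)" using p unfolding A_def B_def by auto
    qed
    have finU: "finite (\<Union>x\<in>X. B x \<times> A x)"
      by (rule finite_subset[OF _ CC]) (auto simp: A_def B_def)
    have h2: "card P \<le> (\<Sum>x\<in>X. card (B x) * card (A x))"
    proof -
      have "card P \<le> card (\<Union>x\<in>X. B x \<times> A x)" by (rule card_mono[OF finU PU])
      also have "\<dots> \<le> (\<Sum>x\<in>X. card (B x \<times> A x))" by (rule card_UN_le[OF finX])
      finally show ?thesis by (simp add: card_cartesian_product)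
    qed
    define D where "D = C \<times> C - (\<lambda>S. (S,S)) ` C"
    have cD: "card D = n*n - n"
    proof -
      have "card ((\<lambda>S. (S,S)) ` C) = n" unfolding n_def by (rule card_image) (auto simp: inj_on_def)
      moreover have "card (C \<times> C) = n*n" unfolding n_def by (simp add: card_cartesian_product)
      ultimately show ?thesis unfolding D_def using assms(1) by (subst card_Diff_subset) auto
    qed
    have DP: "D \<subseteq> P \<union> prod.swap ` P"
    proof
      fix p assume "p \<in> D"
      then obtain S S' where p: "p = (S,S')" "S\<in>C" "S'\<in>C" "S \<noteq> S'" unfolding D_def by auto
      then have "adjG H m S S'" using assms(2) unfolding is_clique_def by auto
      then show "p \<in> P \<union> prod.swap ` P" using p unfolding adjG_def P_def by (auto simp: image_iff)
    qed
    have h1: "n*n - n \<le> 2 * card P"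
    proof -
      have "card D \<le> card (P \<union> prod.swap ` P)" by (rule card_mono) (use finP DP in auto)
      also have "\<dots> \<le> card P + card (prod.swap ` P)" by (rule card_Un_le)
      also have "\<dots> \<le> card P + card P" using card_image_le[OF finP] by simp
      finally show ?thesis using cD by simp
    qed
    have h3: "(\<Sum>x\<in>X. card (A x) + card (B x)) \<le> n*m"
    proof -
      have "(\<Sum>x\<in>X. card (A x) + card (B x)) = (\<Sum>x\<in>X. card (A x)) + (\<Sum>x\<in>X. card (B x))"
        by (simp add: sum.distrib)
      also have "(\<Sum>x\<in>X. card (A x)) = (\<Sum>S\<in>C. card {x\<in>X. (x,True)\<in>set S})"
        unfolding A_def contains_def by (rule swap_count[OF finX assms(1)])
      also have "(\<Sum>x\<in>X. card (B x)) = (\<Sum>S\<in>C. card {x\<in>X. (x,False)\<in>set S})"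
        unfolding B_def contains_def by (rule swap_count[OF finX assms(1)])
      also have "(\<Sum>S\<in>C. card {x\<in>X. (x,True)\<in>set S}) + (\<Sum>S\<in>C. card {x\<in>X. (x,False)\<in>set S})
          = (\<Sum>S\<in>C. card {x\<in>X. (x,True)\<in>set S} + card {x\<in>X. (x,False)\<in>set S})"
        by (simp add: sum.distrib)
      also have "\<dots> \<le> (\<Sum>S\<in>C. m)"
      proof (rule sum_mono)
        fix S assume "S \<in> C"
        then have "length S = m" using assms(2) unfolding is_clique_def V_def by auto
        then show "card {x\<in>X. (x,True)\<in>set S} + card {x\<in>X. (x,False)\<in>set S} \<le> m"
          using count_S[OF finX, of S] by simp
      qed
      finally show ?thesis unfolding n_def by (simp add: mult.commute)
    qed
    have Ppos: "card P \<ge> 1"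
    proof -
      have "2*n \<le> n*n" using n2 by (rule mult_le_mono1)
      then have "n*n - n \<ge> 2" using n2 by linarith
      then show ?thesis using h1 by linarith
    qed
    have ex: "\<exists>x\<in>X. card (B x) * card (A x) > 0"
    proof (rule ccontr)
      assume "\<not> ?thesis"
      then have "(\<Sum>x\<in>X. card (B x) * card (A x)) = 0" by (intro sum.neutral) auto
      then show False using h2 Ppos by linarith
    qed
    have h4: "(\<Sum>x\<in>X. real (card (B x) * card (A x))) < (\<Sum>x\<in>X. t * real (card (A x) + card (B x)))"
    proof (rule sum_strict_mono_ex1[OF finX])
      show "\<forall>x\<in>X. real (card (B x) * card (A x)) \<le> t * real (card (A x) + card (B x))"
        proof
        fix x assume "x \<in> X"
        have "real (card (A x)) * real (card (B x)) \<le> t * (real (card (A x)) + real (card (B x)))"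
          using prod_bound[OF of_nat_0_le_iff of_nat_0_le_iff tpos neg'[of x]] by blast
        then show "real (card (B x) * card (A x)) \<le> t * real (card (A x) + card (B x))"
          by (simp add: mult.commute)
      qed
      show "\<exists>x\<in>X. real (card (B x) * card (A x)) < t * real (card (A x) + card (B x))"
      proof -
        obtain x where "x\<in>X" "card (B x) * card (A x) > 0" using ex by auto
        have pb: "real (card (A x)) * real (card (B x)) > 0 \<longrightarrow> real (card (A x)) * real (card (B x)) < t * (real (card (A x)) + real (card (B x)))"
          using prod_bound[OF of_nat_0_le_iff of_nat_0_le_iff tpos neg'[of x]] by blast
        have "real (card (A x)) * real (card (B x)) > 0" using \<open>card (B x) * card (A x) > 0\<close>
          by (simp add: mult.commute)
        with pb have "real (card (A x)) * real (card (B x)) < t * (real (card (A x)) + real (card (B x)))" by blast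
        then show ?thesis using \<open>x\<in>X\<close> by (intro bexI[of _ x]) (simp_all add: mult.commute)
      qed
    qed
    have "real (n*n - n) \<le> 2 * real (card P)" using h1 by linarith
    also have "\<dots> \<le> 2 * (\<Sum>x\<in>X. real (card (B x) * card (A x)))"
    proof -
      have "real (card P) \<le> real (\<Sum>x\<in>X. card (B x) * card (A x))" using h2 by (simp only: of_nat_le_iff)
      also have "\<dots> = (\<Sum>x\<in>X. real (card (B x) * card (A x)))" by (rule of_nat_sum)
      finally show ?thesis by simp
    qed
    also have "\<dots> < 2 * (\<Sum>x\<in>X. t * real (card (A x) + card (B x)))" using h4 by simp
    also have "\<dots> = 2 * t * real (\<Sum>x\<in>X. card (A x) + card (B x))"
      by (simp add: sum_distrib_left mult.assoc)
    also have "\<dots> \<le> 2 * t * real (n*m)"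
    proof -
      have "real (\<Sum>x\<in>X. card (A x) + card (B x)) \<le> real (n*m)" using h3 by (simp only: of_nat_le_iff)
      then show ?thesis using tpos by (intro mult_left_mono) simp_all
    qed
    also have "\<dots> = real (n*n - n)"
      using m1 n2 unfolding t_def by (simp add: of_nat_diff field_simps)
    finally show False by simp
  qed
qed

end
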